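(* Let $f:\mathbb R^{n+m}\to\mathbb R$ be convex with $g(x)=\inf_y f(x,y)$ finite for every $x$. Let $H_1:\mathbb R^n\to\mathbb R^n$ be the single-valued inverse of $x\mapsto x+\nabla_xg$ and $H:\mathbb R^{n+m}\to\mathbb R^{n+m}$ the single-valued inverse of $(x,y)\mapsto (x,y)+\nabla_{(x,y)}f$, and define $J(x,u,y) = y - \pi_2 H(H_1(x+u)+u,y)$ for $(x,u,y)\in\mathbb R^n\times\mathbb R^n\times\mathbb R^m$, with $\pi_2:\mathbb R^{n+m}\to\mathbb R^m$ the second projection. Then $J$ is Lipschitz in $(x,u,y)$. Moreover, if $(x,y)\mapsto f(x,y) - \frac{\sigma}{2}\|y\|^2$ is convex for some $\sigma>0$, then there is $\lambda>0$ such that for all $x,u\in\mathbb R^n$ and $y_1,y_2\in\mathbb R^m$, $\|J(x,u,y_1) - J(x,u,y_2)\| \ge \lambda \|y_1-y_2\|$.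
   Context: For $h:\mathbb R^k\to\mathbb R$ and $z_0\in\mathbb R^k$, $\nabla_{z_0}h=\{u\in\mathbb R^k: h(z)-h(z_0)\ge u\cdot(z-z_0)\text{ for all } z \text{ sufficiently near } z_0\}$. "Inverse" means $H_1(u)=x\iff u\in x+\nabla_xg$ and $H(u,v)=(x,y)\iff (u,v)\in(x,y)+\nabla_{(x,y)}f$; such single-valued inverses exist for convex $g$, $f$. *)

theory Defs
  imports "HOL-Analysis.Analysis"
begin

definition subgrad :: "('a::real_inner \<Rightarrow> real) \<Rightarrow> 'a \<Rightarrow> 'a set" where
  "subgrad h z0 = {u. \<forall>\<^sub>F z in nhds z0. h z - h z0 \<ge> u \<bullet> (z - z0)}"

end

theory Submission imports Defs begin


lemma subgrad_global:
  fixes h :: "'a::real_inner \<Rightarrow> real"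
  assumes cv: "convex_on UNIV h" and v: "v \<in> subgrad h z"
  shows "h w - h z \<ge> v \<bullet> (w - z)"
proof -
  from v have "\<forall>\<^sub>F x in nhds z. h x - h z \<ge> v \<bullet> (x - z)" by (simp add: subgrad_def)
  then obtain e where e: "e > 0" and P: "\<And>x. dist x z < e \<Longrightarrow> h x - h z \<ge> v \<bullet> (x - z)"
    unfolding eventually_nhds_metric by blast
  define t where "t = min 1 (e / (2 * (norm (w - z) + 1)))"
  have "e / (2 * (norm (w - z) + 1)) > 0" using e by (intro divide_pos_pos mult_pos_pos add_nonneg_pos) auto
  hence t0: "t > 0" by (simp add: t_def)
  have t1: "t \<le> 1" by (simp add: t_def)
  have "t * norm (w - z) \<le> e / (2 * (norm (w - z) + 1)) * norm (w - z)"
    by (intro mult_right_mono) (auto simp: t_def)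
  also have "\<dots> < e"
  proof -
    have eq0: "e / (2 * (norm (w - z) + 1)) * norm (w - z) = e * (norm (w - z) / (2 * (norm (w - z) + 1)))" by simp
    have n: "0 \<le> norm (w - z)" by simp
    have dp: "0 < 2 * (norm (w - z) + 1)" using n by (smt (verit))
    have "norm (w - z) / (2 * (norm (w - z) + 1)) < 1"
      using dp n by (subst divide_less_eq) (smt (verit))+
    then have "e * (norm (w - z) / (2 * (norm (w - z) + 1))) < e * 1" using e by (intro mult_strict_left_mono) auto
    then show ?thesis using eq0 by simp
  qed
  finally have d: "dist ((1 - t) *\<^sub>R z + t *\<^sub>R w) z < e"
    using t0 by (simp add: dist_norm algebra_simps flip: scaleR_diff_right)
  have eq: "(1 - t) *\<^sub>R z + t *\<^sub>R w - z = t *\<^sub>R (w - z)" by (simp add: algebra_simps)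
  have "t * (v \<bullet> (w - z)) = v \<bullet> ((1 - t) *\<^sub>R z + t *\<^sub>R w - z)" by (simp add: eq)
  also have "\<dots> \<le> h ((1 - t) *\<^sub>R z + t *\<^sub>R w) - h z" using P[OF d] .
  also have "\<dots> \<le> (1 - t) * h z + t * h w - h z" using convex_onD[OF cv, of t z w] t0 t1 by simp
  also have "\<dots> = t * (h w - h z)" by (simp add: algebra_simps)
  finally show ?thesis using t0 by simp
qed

lemma resolvent_sub:
  assumes R: "\<And>w p. R w = p \<longleftrightarrow> w \<in> (\<lambda>v. p + v) ` subgrad h p"
  shows "w - R w \<in> subgrad h (R w)"
proof -
  have "w \<in> (\<lambda>v. R w + v) ` subgrad h (R w)" using R[of w "R w"] by simp
  then obtain v where "v \<in> subgrad h (R w)" "w = R w + v" by blast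
  then show ?thesis by (metis add_diff_cancel_left')
qed

lemma resolvent_nonexp:
  fixes h :: "'a::real_inner \<Rightarrow> real"
  assumes cv: "convex_on UNIV h" and R: "\<And>w p. R w = p \<longleftrightarrow> w \<in> (\<lambda>v. p + v) ` subgrad h p"
  shows "norm (R w1 - R w2) \<le> norm (w1 - w2)"
proof -
  let ?p = "R w1" and ?q = "R w2"
  have a: "h ?q - h ?p \<ge> (w1 - ?p) \<bullet> (?q - ?p)"
    by (rule subgrad_global[OF cv resolvent_sub[OF R]])
  have b: "h ?p - h ?q \<ge> (w2 - ?q) \<bullet> (?p - ?q)"
    by (rule subgrad_global[OF cv resolvent_sub[OF R]])
  have "0 \<ge> (w1 - ?p) \<bullet> (?q - ?p) + (w2 - ?q) \<bullet> (?p - ?q)" using a b by linarith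
  hence m: "(w1 - w2) \<bullet> (?p - ?q) \<ge> (?p - ?q) \<bullet> (?p - ?q)"
    by (simp add: algebra_simps inner_diff_left inner_diff_right inner_commute)
  have "(norm (?p - ?q))^2 \<le> (w1 - w2) \<bullet> (?p - ?q)" using m by (simp add: power2_norm_eq_inner)
  also have "\<dots> \<le> norm (w1 - w2) * norm (?p - ?q)" by (rule Cauchy_Schwarz_ineq2[THEN order_trans[OF abs_ge_self]])
  finally have "norm (?p - ?q) * norm (?p - ?q) \<le> norm (w1 - w2) * norm (?p - ?q)" by (simp add: power2_eq_square)
  then show ?thesis
    by (metis mult_right_le_imp_le norm_ge_zero order_le_less mult_zero_left norm_zero)
qed


lemma inf_proj_convex:
  fixes f :: "'a::real_vector \<times> 'b::real_vector \<Rightarrow> real" and g :: "'a \<Rightarrow> real"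
  assumes cf: "convex_on UNIV f" and bb: "\<And>x. bdd_below (range (\<lambda>y. f (x, y)))"
    and gd: "\<And>x. g x = (INF y. f (x, y))"
  shows "convex_on UNIV g"
proof (rule convex_onI)
  fix t :: real and x1 x2 :: 'a
  assume t0: "0 < t" and t1: "t < 1"
  let ?m = "(1 - t) *\<^sub>R x1 + t *\<^sub>R x2"
  have key: "g ?m \<le> (1 - t) * f (x1, y1) + t * f (x2, y2)" for y1 y2
  proof -
    have "g ?m \<le> f (?m, (1 - t) *\<^sub>R y1 + t *\<^sub>R y2)"
      unfolding gd by (rule cINF_lower[OF bb]) simp
    also have "(?m, (1 - t) *\<^sub>R y1 + t *\<^sub>R y2) = (1 - t) *\<^sub>R (x1, y1) + t *\<^sub>R (x2, y2)" by simp
    also have "f \<dots> \<le> (1 - t) * f (x1, y1) + t * f (x2, y2)"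
      using convex_onD[OF cf, of t "(x1, y1)" "(x2, y2)"] t0 t1 by simp
    finally show ?thesis .
  qed
  have k2: "g ?m \<le> (1 - t) * g x1 + t * f (x2, y2)" for y2
  proof -
    have "(g ?m - t * f (x2, y2)) / (1 - t) \<le> g x1"
      unfolding gd[of x1]
    proof (rule cINF_greatest)
      fix y1 show "(g ?m - t * f (x2, y2)) / (1 - t) \<le> f (x1, y1)"
        using key[of y1 y2] t1 by (simp add: divide_le_eq algebra_simps)
    qed simp
    then show ?thesis using t1 by (simp add: divide_le_eq algebra_simps)
  qed
  have "(g ?m - (1 - t) * g x1) / t \<le> g x2"
    unfolding gd[of x2]
  proof (rule cINF_greatest)
    fix y2 show "(g ?m - (1 - t) * g x1) / t \<le> f (x2, y2)"
      using k2[of y2] t0 by (simp add: divide_le_eq algebra_simps)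
  qed simp
  then show "g ?m \<le> (1 - t) * g x1 + t * g x2" using t0 by (simp add: divide_le_eq algebra_simps)
qed simp


lemma strong_sub:
  fixes f :: "'a::real_inner \<times> 'b::real_inner \<Rightarrow> real"
  assumes cf: "convex_on UNIV f"
    and ck: "convex_on UNIV (\<lambda>(x, y). f (x, y) - \<sigma> / 2 * (norm y)\<^sup>2)"
    and v: "v \<in> subgrad f z"
  shows "f z' - f z \<ge> v \<bullet> (z' - z) + \<sigma> / 4 * (norm (snd z' - snd z))\<^sup>2"
proof -
  obtain p q where z: "z = (p, q)" by fastforce
  obtain p' q' where z': "z' = (p', q')" by fastforce
  let ?m = "(1 - 1/2) *\<^sub>R z + (1/2::real) *\<^sub>R z'"
  have m: "?m = ((1/2) *\<^sub>R (p + p'), (1/2) *\<^sub>R (q + q'))" by (simp add: z z' algebra_simps)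
  have A: "f ?m - f z \<ge> v \<bullet> (?m - z)" by (rule subgrad_global[OF cf v])
  have "?m - z = (1/2) *\<^sub>R (z' - z)" by (simp add: algebra_simps flip: scaleR_add_left)
  hence A': "f ?m - f z \<ge> (1/2) * (v \<bullet> (z' - z))" using A by simp
  have B0: "f ?m - \<sigma> / 2 * (norm (snd ?m))\<^sup>2
     \<le> (1 - 1/2) * (f z - \<sigma> / 2 * (norm (snd z))\<^sup>2) + (1/2) * (f z' - \<sigma> / 2 * (norm (snd z'))\<^sup>2)"
    using convex_onD[OF ck, of "1/2" z z'] by (simp add: case_prod_unfold)
  have sm: "snd ?m = (1/2) *\<^sub>R (q + q')" by (simp add: z z' algebra_simps)
  have B: "f ?m - \<sigma> / 2 * (norm ((1/2) *\<^sub>R (q + q')))\<^sup>2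
     \<le> (1 - 1/2) * (f z - \<sigma> / 2 * (norm q)\<^sup>2) + (1/2) * (f z' - \<sigma> / 2 * (norm q')\<^sup>2)"
    using B0 unfolding sm by (simp add: z z')
  have n1: "(norm ((1/2) *\<^sub>R (q + q')))\<^sup>2 = (q \<bullet> q + 2 * (q \<bullet> q') + q' \<bullet> q') / 4"
    unfolding power2_norm_eq_inner by (simp add: inner_add_left inner_add_right inner_commute)
  have n2: "(norm (snd z' - snd z))\<^sup>2 = q \<bullet> q - 2 * (q \<bullet> q') + q' \<bullet> q'"
    by (simp add: z z' power2_norm_eq_inner inner_diff_left inner_diff_right inner_commute)
  have n3: "(norm q)\<^sup>2 = q \<bullet> q" "(norm q')\<^sup>2 = q' \<bullet> q'" by (simp_all add: power2_norm_eq_inner)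
  show ?thesis using A' B unfolding n1 n2 n3 by (simp add: algebra_simps) (simp add: field_simps)
qed


lemma snd_diff_le: "norm (snd a - snd b) \<le> norm (a - b)"
proof -
  obtain a1 a2 where a: "a = (a1, a2)" by fastforce
  obtain b1 b2 where b: "b = (b1, b2)" by fastforce
  show ?thesis unfolding a b using norm_snd_le[of "a2 - b2" "a1 - b1"] by simp
qed

theorem lemma2p14:
  fixes f :: "'a::euclidean_space \<times> 'b::euclidean_space \<Rightarrow> real"
    and g :: "'a \<Rightarrow> real"
    and H1 :: "'a \<Rightarrow> 'a"
    and H :: "'a \<times> 'b \<Rightarrow> 'a \<times> 'b"
    and J :: "'a \<times> 'a \<times> 'b \<Rightarrow> 'b"
  assumes f_convex: "convex_on UNIV f"
    and g_finite: "\<And>x. bdd_below (range (\<lambda>y. f (x, y)))"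
    and g_def: "\<And>x. g x = (INF y. f (x, y))"
    and H1_inv: "\<And>u x. H1 u = x \<longleftrightarrow> u \<in> (\<lambda>v. x + v) ` subgrad g x"
    and H_inv: "\<And>w p. H w = p \<longleftrightarrow> w \<in> (\<lambda>v. p + v) ` subgrad f p"
    and J_def: "\<And>x u y. J (x, u, y) = y - snd (H (H1 (x + u) + u, y))"
  shows "(\<exists>L. L-lipschitz_on UNIV J) \<and>
         ((\<exists>\<sigma>>0. convex_on UNIV (\<lambda>(x, y). f (x, y) - \<sigma> / 2 * (norm y)\<^sup>2)) \<longrightarrow>
          (\<exists>lam>0. \<forall>x u y1 y2.
              norm (J (x, u, y1) - J (x, u, y2)) \<ge> lam * norm (y1 - y2)))"
proof
  have gcv: "convex_on UNIV g" by (rule inf_proj_convex[OF f_convex g_finite g_def])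
  have H1ne: "norm (H1 a - H1 b) \<le> norm (a - b)" for a b
    by (rule resolvent_nonexp[OF gcv H1_inv])
  have Hne: "norm (H a - H b) \<le> norm (a - b)" for a b
    by (rule resolvent_nonexp[OF f_convex H_inv])
  show "\<exists>L. L-lipschitz_on UNIV J"
  proof (intro exI lipschitz_onI)
    fix P P' :: "'a \<times> 'a \<times> 'b"
    obtain x u y where P: "P = (x, u, y)" by (cases P) auto
    obtain x' u' y' where P': "P' = (x', u', y')" by (cases P') auto
    define d where "d = dist P P'"
    have dd: "P - P' = (x - x', u - u', y - y')" by (simp add: P P')
    have dx: "norm (x - x') \<le> d" unfolding d_def dist_norm dd using norm_fst_le[of "x - x'" "(u - u', y - y')"] by simp
    have duy: "norm (u - u', y - y') \<le> d" unfolding d_def dist_norm dd using norm_snd_le[of "(u - u', y - y')" "x - x'"] by simp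
    have du: "norm (u - u') \<le> d" using norm_fst_le[of "u - u'" "y - y'"] duy by simp
    have dy: "norm (y - y') \<le> d" using norm_snd_le[of "y - y'" "u - u'"] duy by simp
    let ?A = "(H1 (x + u) + u, y)" and ?B = "(H1 (x' + u') + u', y')"
    have "norm (fst (?A - ?B)) = norm ((H1 (x + u) - H1 (x' + u')) + (u - u'))" by (simp add: algebra_simps)
    also have "\<dots> \<le> norm (H1 (x + u) - H1 (x' + u')) + norm (u - u')" by (rule norm_triangle_ineq)
    also have "\<dots> \<le> norm ((x + u) - (x' + u')) + norm (u - u')" using H1ne by simp
    also have "norm ((x + u) - (x' + u')) \<le> norm (x - x') + norm (u - u')"
      by (metis add_diff_add norm_triangle_ineq)
    finally have fA: "norm (fst (?A - ?B)) \<le> 3 * d" using dx du by simp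
    have sA: "norm (snd (?A - ?B)) \<le> d" using dy by simp
    have AB: "norm (?A - ?B) \<le> 4 * d"
      using norm_Pair_le[of "fst (?A - ?B)" "snd (?A - ?B)"] fA sA by simp
    have "dist (J P) (J P') = norm ((y - y') - (snd (H ?A) - snd (H ?B)))"
      by (simp add: P P' J_def dist_norm algebra_simps)
    also have "\<dots> \<le> norm (y - y') + norm (snd (H ?A) - snd (H ?B))" by (rule norm_triangle_ineq4)
    also have "norm (snd (H ?A) - snd (H ?B)) \<le> norm (H ?A - H ?B)"
      by (rule snd_diff_le)
    also have "\<dots> \<le> norm (?A - ?B)" by (rule Hne)
    finally show "dist (J P) (J P') \<le> 5 * dist P P'" using dy AB unfolding d_def by simp
  qed simp
  show "(\<exists>\<sigma>>0. convex_on UNIV (\<lambda>(x, y). f (x, y) - \<sigma> / 2 * (norm y)\<^sup>2)) \<longrightarrow>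
          (\<exists>lam>0. \<forall>x u y1 y2.
              norm (J (x, u, y1) - J (x, u, y2)) \<ge> lam * norm (y1 - y2))"
  proof
    assume "\<exists>\<sigma>>0. convex_on UNIV (\<lambda>(x, y). f (x, y) - \<sigma> / 2 * (norm y)\<^sup>2)"
    then obtain \<sigma> where s0: "\<sigma> > 0" and ck: "convex_on UNIV (\<lambda>(x, y). f (x, y) - \<sigma> / 2 * (norm y)\<^sup>2)"
      by blast
    show "\<exists>lam>0. \<forall>x u y1 y2. norm (J (x, u, y1) - J (x, u, y2)) \<ge> lam * norm (y1 - y2)"
    proof (intro exI[of _ "\<sigma> / (\<sigma> + 2)"] conjI allI)
      show "\<sigma> / (\<sigma> + 2) > 0" using s0 by simp
      fix x u y1 y2
      define a where "a = H1 (x + u) + u"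
      obtain p1 q1 where z1: "H (a, y1) = (p1, q1)" by fastforce
      obtain p2 q2 where z2: "H (a, y2) = (p2, q2)" by fastforce
      have v1: "(a, y1) - (p1, q1) \<in> subgrad f (p1, q1)"
        using resolvent_sub[OF H_inv, of "(a, y1)"] z1 by simp
      have v2: "(a, y2) - (p2, q2) \<in> subgrad f (p2, q2)"
        using resolvent_sub[OF H_inv, of "(a, y2)"] z2 by simp
      define D where "D = (y1 - q1) - (y2 - q2)"
      define E where "E = q1 - q2"
      have i1: "f (p2, q2) - f (p1, q1) \<ge> ((a, y1) - (p1, q1)) \<bullet> ((p2, q2) - (p1, q1)) + \<sigma> / 4 * (norm (q2 - q1))\<^sup>2"
        using strong_sub[OF f_convex ck v1, of "(p2, q2)"] by simp
      have i2: "f (p1, q1) - f (p2, q2) \<ge> ((a, y2) - (p2, q2)) \<bullet> ((p1, q1) - (p2, q2)) + \<sigma> / 4 * (norm (q1 - q2))\<^sup>2"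
        using strong_sub[OF f_convex ck v2, of "(p1, q1)"] by simp
      have nq: "norm (q2 - q1) = norm E" unfolding E_def by (rule norm_minus_commute)
      have "((a, y1) - (p1, q1)) \<bullet> ((p2, q2) - (p1, q1)) + ((a, y2) - (p2, q2)) \<bullet> ((p1, q1) - (p2, q2))
          = (((a, y1) - (p1, q1)) - ((a, y2) - (p2, q2))) \<bullet> ((p2, q2) - (p1, q1))"
        by (metis inner_diff_left inner_minus_right minus_diff_eq diff_conv_add_uminus)
      also have "\<dots> = (p2 - p1, D) \<bullet> (p2 - p1, - E)"
        by (simp add: D_def E_def algebra_simps)
      also have "\<dots> = (p2 - p1) \<bullet> (p2 - p1) - D \<bullet> E" by (simp add: inner_Pair)
      finally have eqs: "((a, y1) - (p1, q1)) \<bullet> ((p2, q2) - (p1, q1)) + ((a, y2) - (p2, q2)) \<bullet> ((p1, q1) - (p2, q2))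
          = (p2 - p1) \<bullet> (p2 - p1) - D \<bullet> E" .
      have nq2: "norm (q1 - q2) = norm E" unfolding E_def ..
      have hs: "\<sigma> / 4 * (norm E)\<^sup>2 + \<sigma> / 4 * (norm E)\<^sup>2 = \<sigma> / 2 * (norm E)\<^sup>2" by simp
      have "0 \<ge> (p2 - p1) \<bullet> (p2 - p1) - D \<bullet> E + \<sigma> / 2 * (norm E)\<^sup>2"
        using i1 i2 eqs hs unfolding nq nq2 by linarith
      moreover have "(p2 - p1) \<bullet> (p2 - p1) \<ge> 0" by simp
      ultimately have key: "D \<bullet> E \<ge> \<sigma> / 2 * (norm E)\<^sup>2" by linarith
      have "D \<bullet> E \<le> norm D * norm E" by (rule order_trans[OF abs_ge_self Cauchy_Schwarz_ineq2])
      with key have "\<sigma> / 2 * (norm E) * norm E \<le> norm D * norm E" by (simp add: power2_eq_square mult.assoc)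
      hence DE0: "\<sigma> / 2 * norm E \<le> norm D"
      proof (cases "norm E = 0")
        case True then show ?thesis by simp
      next
        case False then have "norm E > 0" by simp
        then show ?thesis using mult_right_le_imp_le[OF \<open>\<sigma> / 2 * (norm E) * norm E \<le> norm D * norm E\<close>] by simp
      qed
      hence DE: "\<sigma> * norm E \<le> 2 * norm D" by simp
      have J1: "J (x, u, y1) = y1 - q1" by (simp add: J_def a_def[symmetric] z1)
      have J2: "J (x, u, y2) = y2 - q2" by (simp add: J_def a_def[symmetric] z2)
      have "y1 - y2 = D + E" by (simp add: D_def E_def algebra_simps)
      hence "norm (y1 - y2) \<le> norm D + norm E" by (simp add: norm_triangle_ineq)
      hence "\<sigma> * norm (y1 - y2) \<le> \<sigma> * (norm D + norm E)" using s0 by (intro mult_left_mono) auto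
      also have "\<dots> = \<sigma> * norm D + \<sigma> * norm E" by (simp add: algebra_simps)
      also have "\<dots> \<le> \<sigma> * norm D + 2 * norm D" using DE by simp
      also have "\<dots> = (\<sigma> + 2) * norm D" by (simp add: algebra_simps)
      finally have "\<sigma> * norm (y1 - y2) \<le> (\<sigma> + 2) * norm D" .
      hence "\<sigma> / (\<sigma> + 2) * norm (y1 - y2) \<le> norm D" using s0 by (simp add: field_simps)
      then show "\<sigma> / (\<sigma> + 2) * norm (y1 - y2) \<le> norm (J (x, u, y1) - J (x, u, y2))"
        by (simp add: J1 J2 D_def)
    qed
  qed
qed

end
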